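(* Let $X$ be an $n$-dimensional projective space over a field, $-1\le t\le s\le n$, and let $K$ be a $k$-dimensional subspace of $X$ with $-1\le k\le n-s-1$. For every integer $-1\le d\le\min\{k,s\}$, suppose integers $t_1(d),s_1(d),t_2(d),s_2(d)$ satisfy $-1\le t_1(d)\le s_1(d)=d$, $-1\le t_2(d)\le s_2(d)$, $t_1(d)+t_2(d)+1=t$ and $s_1(d)+s_2(d)+1=s$, and choose a set $\mathcal B_K(d)\subseteq\mathrm{Gr}_{t_1(d)}(K)$ blocking $\mathrm{Gr}_{s_1(d)}(K)$ and a set $\mathcal B_{X/K}(d)\subseteq\mathrm{Gr}_{t_2(d)}(X/K)$ blocking $\mathrm{Gr}_{s_2(d)}(X/K)$. Then $\mathcal B:=\bigcup_{d=-1}^{\min\{k,s\}}\mathcal B(d)$ is an $(s,t)$-blocking set in $X$, where $$\mathcal B(d):=\{T\in\mathrm{Gr}_t(X): K\cap T\in\mathcal B_K(d),\ \langle K,T\rangle\in\mathcal B_{X/K}(d)\}.$$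
   Context: Projective dimension is used (empty subspace has dimension $-1$); $\mathrm{Gr}_d(Y)$ is the set of $d$-dimensional subspaces of $Y$. For a $k$-dimensional subspace $K$ of $X$, the quotient space $X/K$ is the projective space of dimension $\dim X-k-1$ whose $r$-dimensional subspaces are the $(r+k+1)$-dimensional subspaces of $X$ containing $K$; the span $\langle K,T\rangle$ is regarded as an element of $X/K$. A set $\mathcal B$ of $t$-dimensional subspaces blocks a set $\mathcal S$ of $s$-dimensional subspaces if every member of $\mathcal S$ contains a member of $\mathcal B$; an $(s,t)$-blocking set in $X$ is a subset of $\mathrm{Gr}_t(X)$ blocking $\mathrm{Gr}_s(X)$. *)

theory Defs
  imports "HOL-Analysis.Analysis"
begin

text \<open>The projective space X = PG(n,F) is modelled as the lattice of linear subspaces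
of the vector space F^(n+1) = 'a^'n (with CARD('n) = n+1). A projective subspace is a
linear subspace; its projective dimension is its vector dimension minus 1 (so the
zero subspace, i.e. the empty projective subspace, has dimension -1).\<close>

definition pdim :: "('a::field ^ 'n) set \<Rightarrow> int" where
  "pdim S = int (vec.dim S) - 1"

definition Gr :: "int \<Rightarrow> ('a::field ^ 'n) set \<Rightarrow> ('a ^ 'n) set set" where
  "Gr d Y = {U. vec.subspace U \<and> U \<subseteq> Y \<and> pdim U = d}"

text \<open>Gr_r(X/K): the r-dimensional subspaces of the quotient space X/K, i.e. the
(r+k+1)-dimensional subspaces of X containing K, where k = pdim K.\<close>
definition GrQ :: "int \<Rightarrow> ('a::field ^ 'n) set \<Rightarrow> ('a ^ 'n) set set" where
  "GrQ r K = {U. vec.subspace U \<and> K \<subseteq> U \<and> pdim U = r + pdim K + 1}"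

definition blocks :: "'v set set \<Rightarrow> 'v set set \<Rightarrow> bool" where
  "blocks B S \<longleftrightarrow> (\<forall>S'\<in>S. \<exists>T\<in>B. T \<subseteq> S')"

definition blocking_set :: "int \<Rightarrow> int \<Rightarrow> ('a::field ^ 'n) set set \<Rightarrow> bool" where
  "blocking_set s t B \<longleftrightarrow> B \<subseteq> Gr t UNIV \<and> blocks B (Gr s UNIV)"

definition join :: "('a::field ^ 'n) set \<Rightarrow> ('a ^ 'n) set \<Rightarrow> ('a ^ 'n) set" where
  "join K T = vec.span (K \<union> T)"

end

theory Submission
  imports Defs
begin

lemma span_Un_subspaces:
  fixes A B :: "('a::field ^ 'n) set"
  assumes "vec.subspace A" "vec.subspace B"
  shows "vec.span (A \<union> B) = {x + y |x y. x \<in> A \<and> y \<in> B}"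
proof -
  have "vec.span A = A" "vec.span B = B" using assms by simp_all
  then show ?thesis unfolding vec.span_Un by (simp only:)
qed

lemma dim_join:
  fixes A B :: "('a::field ^ 'n) set"
  assumes "vec.subspace A" "vec.subspace B"
  shows "vec.dim (vec.span (A \<union> B)) + vec.dim (A \<inter> B) = vec.dim A + vec.dim B"
  using vec.dim_sums_Int[OF assms] span_Un_subspaces[OF assms] by simp

lemma complement_exists:
  fixes A V :: "('a::field ^ 'n) set"
  assumes "vec.subspace A" "vec.subspace V" "A \<subseteq> V"
  obtains W where "vec.subspace W" "W \<subseteq> V" "A \<inter> W \<subseteq> {0}"
    "vec.dim W + vec.dim A = vec.dim V"
proof -
  obtain B where B: "B \<subseteq> A" "A \<subseteq> vec.span B" "vec.independent B" "card B = vec.dim A"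
    using vec.basis_exists by metis
  obtain C where C: "B \<subseteq> C" "C \<subseteq> V" "vec.independent C" "V \<subseteq> vec.span C"
    using vec.maximal_independent_subset_extend[of B V] B assms(3) by blast
  have fC: "finite C" using C(3) vec.finiteI_independent by blast
  have spB: "vec.span B = A"
    using B assms(1) by (meson subset_antisym vec.span_minimal)
  have spC: "vec.span C = V"
    using C assms(2) by (meson subset_antisym vec.span_minimal)
  have dC: "vec.dim V = card C" using spC C(3) vec.dim_span_eq_card_independent by metis
  have indD: "vec.independent (C - B)" using C(3) vec.independent_mono by blast
  have dD: "vec.dim (vec.span (C - B)) = card (C - B)"
    using indD vec.dim_span_eq_card_independent by blast
  have cD: "card (C - B) + card B = card C"
    using C(1) fC by (metis card_Diff_subset card_mono finite_subset le_add_diff_inverse2)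
  have un: "vec.span (A \<union> vec.span (C - B)) = V"
  proof -
    have "vec.span (A \<union> vec.span (C - B)) = vec.span (vec.span B \<union> vec.span (C - B))"
      using spB by simp
    also have "\<dots> = vec.span (B \<union> (C - B))" by (simp only: vec.span_Un vec.span_span)
    also have "B \<union> (C - B) = C" using C(1) by blast
    finally show ?thesis using spC by simp
  qed
  have "vec.dim (vec.span (A \<union> vec.span (C - B))) + vec.dim (A \<inter> vec.span (C - B))
        = vec.dim A + vec.dim (vec.span (C - B))"
    by (rule dim_join[OF assms(1) vec.subspace_span])
  then have "card C + vec.dim (A \<inter> vec.span (C - B)) = vec.dim A + card (C - B)"
    using un dC dD by simp
  then have "vec.dim (A \<inter> vec.span (C - B)) = 0"
    using cD B(4) by linarith
  then have "A \<inter> vec.span (C - B) \<subseteq> {0}" by simp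
  moreover have "vec.span (C - B) \<subseteq> V"
    using C(2) assms(2) by (meson Diff_subset order_trans vec.span_minimal)
  ultimately show ?thesis
    using that[of "vec.span (C - B)"] dD cD B(4) dC by simp
qed

theorem corollary3p7:
  fixes n t s k :: int
    and K :: "('a::field ^ 'n) set"
    and t1 s1 t2 s2 :: "int \<Rightarrow> int"
    and BK BQ :: "int \<Rightarrow> ('a ^ 'n) set set"
  assumes n_def: "n = int CARD('n) - 1"
    and "-1 \<le> t" and "t \<le> s" and "s \<le> n"
    and K_sub: "vec.subspace K" and K_dim: "pdim K = k"
    and "-1 \<le> k" and "k \<le> n - s - 1"
    and params: "\<And>d. -1 \<le> d \<Longrightarrow> d \<le> min k s \<Longrightarrow>
        -1 \<le> t1 d \<and> t1 d \<le> s1 d \<and> s1 d = d \<and> -1 \<le> t2 d \<and> t2 d \<le> s2 d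
        \<and> t1 d + t2 d + 1 = t \<and> s1 d + s2 d + 1 = s"
    and BK: "\<And>d. -1 \<le> d \<Longrightarrow> d \<le> min k s \<Longrightarrow>
        BK d \<subseteq> Gr (t1 d) K \<and> blocks (BK d) (Gr (s1 d) K)"
    and BQ: "\<And>d. -1 \<le> d \<Longrightarrow> d \<le> min k s \<Longrightarrow>
        BQ d \<subseteq> GrQ (t2 d) K \<and> blocks (BQ d) (GrQ (s2 d) K)"
  shows "blocking_set s t
           (\<Union>d\<in>{-1..min k s}. {T \<in> Gr t UNIV. K \<inter> T \<in> BK d \<and> join K T \<in> BQ d})"
  unfolding blocking_set_def
proof (intro conjI)
  show "(\<Union>d\<in>{-1..min k s}. {T \<in> Gr t UNIV. K \<inter> T \<in> BK d \<and> join K T \<in> BQ d}) \<subseteq> Gr t UNIV"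
    by blast
  show "blocks (\<Union>d\<in>{-1..min k s}. {T \<in> Gr t UNIV. K \<inter> T \<in> BK d \<and> join K T \<in> BQ d})
     (Gr s UNIV)"
    unfolding blocks_def
  proof
    fix S assume "S \<in> Gr s (UNIV :: ('a ^ 'n) set)"
    then have S_sub: "vec.subspace S" and S_dim: "int (vec.dim S) - 1 = s"
      by (auto simp: Gr_def pdim_def)
    have Kd: "int (vec.dim K) - 1 = k" using K_dim by (simp add: pdim_def)
    define I where "I = K \<inter> S"
    define d where "d = int (vec.dim I) - 1"
    have I_sub: "vec.subspace I" unfolding I_def using K_sub S_sub by (rule vec.subspace_inter)
    have "vec.dim I \<le> vec.dim K" "vec.dim I \<le> vec.dim S"
      unfolding I_def by (auto intro: vec.dim_subset)
    then have d_rng: "-1 \<le> d" "d \<le> min k s" using Kd S_dim by (auto simp: d_def)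
    note pr = params[OF d_rng] and bk = BK[OF d_rng] and bq = BQ[OF d_rng]
    have "I \<in> Gr (s1 d) K" using pr I_sub by (auto simp: Gr_def pdim_def d_def I_def)
    then obtain T1 where T1: "T1 \<in> BK d" "T1 \<subseteq> I" using bk by (auto simp: blocks_def)
    then have T1p: "vec.subspace T1" "T1 \<subseteq> K" "int (vec.dim T1) - 1 = t1 d"
      using bk by (auto simp: Gr_def pdim_def)
    define J where "J = vec.span (K \<union> S)"
    have J_sub: "vec.subspace J" unfolding J_def by simp
    have KJ: "K \<subseteq> J" "S \<subseteq> J" unfolding J_def by (auto intro: vec.span_base)
    have dJ: "vec.dim J + vec.dim I = vec.dim K + vec.dim S"
      unfolding J_def I_def by (rule dim_join[OF K_sub S_sub])
    have "J \<in> GrQ (s2 d) K" using J_sub KJ dJ pr Kd S_dim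
      by (auto simp: GrQ_def pdim_def d_def)
    then obtain Q where Q: "Q \<in> BQ d" "Q \<subseteq> J" using bq by (auto simp: blocks_def)
    then have Qp: "vec.subspace Q" "K \<subseteq> Q" "int (vec.dim Q) - 1 = t2 d + k + 1"
      using bq Kd by (auto simp: GrQ_def pdim_def)
    define V where "V = Q \<inter> S"
    have V_sub: "vec.subspace V" unfolding V_def using Qp(1) S_sub by (rule vec.subspace_inter)
    have QSJ: "vec.span (Q \<union> S) = J"
    proof (rule subset_antisym)
      show "vec.span (Q \<union> S) \<subseteq> J" using Q(2) KJ J_sub by (simp add: vec.span_minimal)
      show "J \<subseteq> vec.span (Q \<union> S)" unfolding J_def using Qp(2)
        by (meson Un_mono order_refl vec.span_mono)
    qed
    have dV: "vec.dim J + vec.dim V = vec.dim Q + vec.dim S"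
      using dim_join[OF Qp(1) S_sub] QSJ by (simp add: V_def)
    have IV: "I \<subseteq> V" unfolding I_def V_def using Qp(2) by blast
    obtain W where W: "vec.subspace W" "W \<subseteq> V" "I \<inter> W \<subseteq> {0}"
      "vec.dim W + vec.dim I = vec.dim V"
      using complement_exists[OF I_sub V_sub IV] by blast
    have KW: "K \<inter> W \<subseteq> {0}" using W(2,3) unfolding I_def V_def by blast
    have dW: "int (vec.dim W) = t2 d + 1"
      using W(4) dV dJ Qp(3) Kd by linarith
    define T where "T = vec.span (T1 \<union> W)"
    have T_sub: "vec.subspace T" unfolding T_def by simp
    have TS: "T \<subseteq> S" unfolding T_def
      using T1(2) W(2) S_sub unfolding I_def V_def
      by (intro vec.span_minimal) auto
    have "vec.dim T + vec.dim (T1 \<inter> W) = vec.dim T1 + vec.dim W"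
      unfolding T_def by (rule dim_join[OF T1p(1) W(1)])
    moreover have "vec.dim (T1 \<inter> W) = 0" using KW T1p(2) by auto
    ultimately have dT: "int (vec.dim T) - 1 = t" using T1p(3) dW pr by linarith
    have T_eq: "T = {x + y |x y. x \<in> T1 \<and> y \<in> W}"
      unfolding T_def by (rule span_Un_subspaces[OF T1p(1) W(1)])
    have KT: "K \<inter> T = T1"
    proof
      show "T1 \<subseteq> K \<inter> T" using T1p(2) unfolding T_def by (auto intro: vec.span_base)
      show "K \<inter> T \<subseteq> T1"
      proof
        fix x assume x: "x \<in> K \<inter> T"
        then obtain a w where aw: "x = a + w" "a \<in> T1" "w \<in> W" using T_eq by blast
        have "w = x - a" using aw by simp
        moreover have "x - a \<in> K" using x aw T1p(2) K_sub vec.subspace_diff by blast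
        ultimately have "w = 0" using KW aw by blast
        then show "x \<in> T1" using aw by simp
      qed
    qed
    have JQ: "join K T = Q"
    proof (rule vec.subspace_dim_equal)
      show "vec.subspace (join K T)" by (simp add: join_def)
      show "vec.subspace Q" by (rule Qp(1))
      show "join K T \<subseteq> Q"
      proof -
        have "T1 \<union> W \<subseteq> Q" using Qp(2) T1p(2) W(2) unfolding V_def by blast
        then have "vec.span (T1 \<union> W) \<subseteq> Q" using Qp(1) by (meson vec.span_minimal)
        then have "K \<union> vec.span (T1 \<union> W) \<subseteq> Q" using Qp(2) by blast
        then show ?thesis using Qp(1) unfolding join_def T_def by (meson vec.span_minimal)
      qed
      have "vec.dim (vec.span (K \<union> W)) + vec.dim (K \<inter> W) = vec.dim K + vec.dim W"
        by (rule dim_join[OF K_sub W(1)])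
      moreover have "vec.dim (K \<inter> W) = 0" using KW by auto
      moreover have "vec.span (K \<union> W) \<subseteq> join K T" unfolding join_def T_def
        by (intro vec.span_mono) (auto intro: vec.span_base)
      ultimately have "vec.dim (vec.span (K \<union> W)) \<le> vec.dim (join K T)"
        using vec.dim_subset by blast
      then show "vec.dim Q \<le> vec.dim (join K T)"
        using \<open>vec.dim (vec.span (K \<union> W)) + _ = _\<close> \<open>vec.dim (K \<inter> W) = 0\<close> dW Qp(3) Kd
        by linarith
    qed
    have "T \<in> Gr t UNIV" using T_sub dT by (simp add: Gr_def pdim_def)
    then have "T \<in> (\<Union>d\<in>{-1..min k s}. {T \<in> Gr t UNIV. K \<inter> T \<in> BK d \<and> join K T \<in> BQ d})"
      using d_rng KT JQ T1(1) Q(1) by auto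
    then show "\<exists>T\<in>(\<Union>d\<in>{-1..min k s}. {T \<in> Gr t UNIV. K \<inter> T \<in> BK d \<and> join K T \<in> BQ d}).
      T \<subseteq> S" using TS by blast
  qed
qed

end
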